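(* Let $\lambda\in\mathbb{R}\setminus\{0\}$. For every $n\ge1$, $v_n=K_{0,\lambda}u_n$ is the restriction to $z=-iy$, $y\ge0$, of an element of $\mathbb{B}_0$.
   Context: $\mathbb{B}$ is the Bargmann space of entire functions $\varphi$ with $\frac1\pi\int_{\mathbb{C}}|\varphi|^2e^{-|z|^2}dxdy<\infty$; $\mathbb{B}_0=\{\varphi\in\mathbb{B}:\varphi(0)=0\}$ with orthonormal basis $\tilde e_k(z)=(iz)^k/\sqrt{k!}$, $k\ge1$; $u_k(y)=\tilde e_k(-iy)=y^k/\sqrt{k!}$. $K_{0,\lambda}\psi(y)=\frac1\lambda\int_0^ye^{t^2/2}\big(\int_t^\infty s^{-1}e^{-s^2/2}\psi(s)\,ds\big)dt$. *)

theory Defs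
  imports "HOL-Analysis.Analysis"
begin

text \<open>Bargmann space: entire functions with finite Gaussian-weighted L2 norm
  (the normalising factor 1/pi does not affect membership).\<close>
definition bargmann :: "(complex \<Rightarrow> complex) set" where
  "bargmann = {\<phi>. \<phi> holomorphic_on UNIV \<and>
     integrable lborel (\<lambda>z. (cmod (\<phi> z))\<^sup>2 * exp (- (cmod z)\<^sup>2))}"

definition bargmann0 :: "(complex \<Rightarrow> complex) set" where
  "bargmann0 = {\<phi> \<in> bargmann. \<phi> 0 = 0}"

definition u :: "nat \<Rightarrow> real \<Rightarrow> real" where
  "u k y = y ^ k / sqrt (fact k)"

definition K0 :: "real \<Rightarrow> (real \<Rightarrow> real) \<Rightarrow> real \<Rightarrow> real" where
  "K0 lam \<psi> y = (1 / lam) *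
     (LBINT t=0..y. exp (t\<^sup>2 / 2) *
        (LBINT s:{t..}. inverse s * exp (- (s\<^sup>2) / 2) * \<psi> s))"

end

theory Submission
  imports Defs "HOL-Probability.Distributions" "HOL-Real_Asymp.Real_Asymp"
begin
lemma lborel_complex_eq:
  "distr (lborel \<Otimes>\<^sub>M lborel) borel (\<lambda>p. Complex (fst p) (snd p)) = (lborel :: complex measure)"
proof (rule lborel_eqI[symmetric])
  fix l u :: complex
  assume le: "\<And>b. b \<in> Basis \<Longrightarrow> l \<bullet> b \<le> u \<bullet> b"
  have m: "(\<lambda>p. Complex (fst p) (snd p)) \<in> (lborel \<Otimes>\<^sub>M lborel) \<rightarrow>\<^sub>M (borel :: complex measure)"
  proof -
    have "(\<lambda>p. Complex (fst p) (snd p)) \<in> (borel :: (real*real) measure) \<rightarrow>\<^sub>M (borel :: complex measure)"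
      by (intro borel_measurable_continuous_onI continuous_intros)
    then show ?thesis by (simp add: lborel_prod)
  qed
  have pre: "(\<lambda>p. Complex (fst p) (snd p)) -` box l u \<inter> space (lborel \<Otimes>\<^sub>M lborel) = {Re l<..<Re u} \<times> {Im l<..<Im u}"
    by (auto simp: box_def Basis_complex_def space_pair_measure)
  have "Re l \<le> Re u" "Im l \<le> Im u" using le[of 1] le[of "\<i>"] by (auto simp: Basis_complex_def)
  then show "emeasure (distr (lborel \<Otimes>\<^sub>M lborel) borel (\<lambda>p. Complex (fst p) (snd p))) (box l u) = (\<Prod>b\<in>Basis. (u - l) \<bullet> b)"
    by (simp add: emeasure_distr[OF m] pre lborel.emeasure_pair_measure_Times Basis_complex_def ennreal_mult)
qed simp

lemma pow_div_fact_le_exp: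
  fixes x :: real assumes "0 \<le> x" shows "x ^ n / fact n \<le> exp x"
proof -
  have s: "summable (\<lambda>k. x ^ k /\<^sub>R fact k)" by (rule summable_exp_generic)
  have "x ^ n / fact n \<le> (\<Sum>k. x ^ k /\<^sub>R fact k)"
    using sum_le_suminf[OF s, of "{n}"] assms by (auto simp: divide_inverse mult.commute)
  then show ?thesis by (simp add: exp_def)
qed

lemma integral_deriv_zero:
  fixes F f :: "real \<Rightarrow> complex"
  assumes der: "\<And>x. (F has_vector_derivative f x) (at x)"
    and cont: "continuous_on UNIV f" and int: "integrable lborel f"
    and top: "(F \<longlongrightarrow> 0) at_top" and bot: "(F \<longlongrightarrow> 0) at_bot"
  shows "integral\<^sup>L lborel f = 0"
proof -
  have eq: "(\<integral>x. indicator {- real k..real k} x *\<^sub>R f x \<partial>lborel) = F (real k) - F (- real k)" for k :: nat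
  proof -
    have "(LBINT x=- real k..real k. f x) = F (real k) - F (- real k)"
      by (rule interval_integral_FTC_finite)
         (auto intro: continuous_on_subset[OF cont] has_vector_derivative_at_within[OF der])
    then show ?thesis
      by (simp add: interval_integral_Icc set_lebesgue_integral_def)
  qed
  have lim1: "(\<lambda>k. \<integral>x. indicator {- real k..real k} x *\<^sub>R f x \<partial>lborel) \<longlonglongrightarrow> integral\<^sup>L lborel f"
  proof (rule integral_dominated_convergence[where w="\<lambda>x. norm (f x)"])
    show "(\<lambda>x. indicat_real {- real i..real i} x *\<^sub>R f x) \<in> borel_measurable lborel" for i
      using int by (intro borel_measurable_integrable integrable_mult_indicator) auto
    show "f \<in> borel_measurable lborel" using int by auto
    show "integrable lborel (\<lambda>x. norm (f x))" using int by auto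
    show "AE x in lborel. (\<lambda>i. indicat_real {- real i..real i} x *\<^sub>R f x) \<longlonglongrightarrow> f x"
    proof (intro AE_I2 tendsto_eventually)
      fix x :: real
      obtain N :: nat where "\<bar>x\<bar> \<le> real N" using real_arch_simple by blast
      then show "\<forall>\<^sub>F i in sequentially. indicat_real {- real i..real i} x *\<^sub>R f x = f x"
        by (intro eventually_sequentiallyI[of N]) (auto simp: indicator_def)
    qed
    show "\<And>i. AE x in lborel. norm (indicat_real {- real i..real i} x *\<^sub>R f x) \<le> norm (f x)"
      by (auto simp: indicator_def)
  qed
  have lim2: "(\<lambda>k. F (real k) - F (- real k)) \<longlonglongrightarrow> 0 - 0"
  proof (intro tendsto_diff)
    show "(\<lambda>k. F (real k)) \<longlonglongrightarrow> 0"
      using filterlim_compose[OF top filterlim_real_sequentially] by simp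
    have "filterlim (\<lambda>k. - real k) at_bot sequentially"
      using filterlim_uminus_at_top[THEN iffD1, OF filterlim_real_sequentially] by simp
    then show "(\<lambda>k. F (- real k)) \<longlonglongrightarrow> 0"
      using filterlim_compose[OF bot] by blast
  qed
  from lim1 lim2 show ?thesis unfolding eq by (simp add: LIMSEQ_unique)
qed

definition ZZ :: "real \<Rightarrow> real \<Rightarrow> complex" where
  "ZZ x y = complex_of_real x + \<i> * complex_of_real y"

lemma norm_ZZ_sq: "(cmod (ZZ x y))\<^sup>2 = x\<^sup>2 + y\<^sup>2"
  by (simp add: ZZ_def cmod_power2)

lemma cont_ZZ[continuous_intros]: "continuous_on UNIV (\<lambda>p. ZZ (fst p) (snd p))"
  unfolding ZZ_def by (intro continuous_intros)

definition gau :: "real \<Rightarrow> real" where "gau x = exp (- (x\<^sup>2) / 2)"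

lemma gau_pos: "0 < gau x" by (simp add: gau_def)

lemma integrable_gau: "integrable lborel gau"
proof -
  have "integrable lborel (\<lambda>x. sqrt (2*pi) * std_normal_density x)"
    by (intro integrable_mult_right) (simp add: integrable_normal_density)
  moreover have "(\<lambda>x. sqrt (2*pi) * std_normal_density x) = gau"
    by (auto simp: std_normal_density_def gau_def fun_eq_iff)
  ultimately show ?thesis by simp
qed

lemma measurable_P2_cont:
  fixes g :: "real \<times> real \<Rightarrow> 'b::{banach,second_countable_topology}"
  assumes "continuous_on UNIV g"
  shows "g \<in> borel_measurable (lborel \<Otimes>\<^sub>M lborel)"
proof -
  have "g \<in> borel_measurable borel" using assms by (rule borel_measurable_continuous_onI)
  then show ?thesis by (simp add: lborel_prod)
qed

lemma integrable_gau2: "integrable (lborel \<Otimes>\<^sub>M lborel) (\<lambda>p. gau (fst p) * gau (snd p))"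
proof (rule lborel_pair.Fubini_integrable)
  show "(\<lambda>p. gau (fst p) * gau (snd p)) \<in> borel_measurable (lborel \<Otimes>\<^sub>M lborel)"
    by (intro measurable_P2_cont) (auto simp: gau_def intro!: continuous_intros)
  have "(\<lambda>x. \<integral>y. norm (gau (fst (x, y)) * gau (snd (x, y))) \<partial>lborel) = (\<lambda>x. gau x * integral\<^sup>L lborel gau)"
    by (auto simp: fun_eq_iff abs_of_pos gau_pos abs_mult)
  then show "integrable lborel (\<lambda>x. \<integral>y. norm (gau (fst (x, y)) * gau (snd (x, y))) \<partial>lborel)"
    using integrable_gau by (simp add: integrable_mult_left)
  show "AE x in lborel. integrable lborel (\<lambda>y. gau (fst (x, y)) * gau (snd (x, y)))"
    using integrable_gau by (simp add: integrable_mult_right)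
qed

lemma integrable_P2_bound:
  fixes g :: "real \<times> real \<Rightarrow> 'b::{banach,second_countable_topology}"
  assumes "continuous_on UNIV g" and "\<And>x y. norm (g (x, y)) \<le> C * (gau x * gau y)"
  shows "integrable (lborel \<Otimes>\<^sub>M lborel) g"
proof (rule Bochner_Integration.integrable_bound)
  show "integrable (lborel \<Otimes>\<^sub>M lborel) (\<lambda>p. C * (gau (fst p) * gau (snd p)))"
    using integrable_gau2 by (rule integrable_mult_right)
  show "g \<in> borel_measurable (lborel \<Otimes>\<^sub>M lborel)" using assms(1) by (rule measurable_P2_cont)
  show "AE p in lborel \<Otimes>\<^sub>M lborel. norm (g p) \<le> norm (C * (gau (fst p) * gau (snd p)))"
  proof (intro AE_I2)
    fix p :: "real \<times> real"
    obtain x y where p: "p = (x, y)" by (cases p)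
    have "norm (g p) \<le> C * (gau x * gau y)" using assms(2) p by simp
    also have "\<dots> \<le> norm (C * (gau (fst p) * gau (snd p)))" using abs_ge_self[of "C * (gau x * gau y)"] p by (simp only: real_norm_def fst_conv snd_conv)
    finally show "norm (g p) \<le> norm (C * (gau (fst p) * gau (snd p)))" .
  qed
qed

lemma poly_gauss_bound:
  "cmod (ZZ x y) ^ p * exp (- (x\<^sup>2 + y\<^sup>2)) \<le> (1 + 2 ^ p * fact p) * (gau x * gau y)"
proof -
  define r where "r = x\<^sup>2 + y\<^sup>2"
  have r0: "0 \<le> r" by (simp add: r_def)
  have nr: "cmod (ZZ x y) ^ 2 = r" by (simp add: r_def norm_ZZ_sq)
  have a: "cmod (ZZ x y) ^ p \<le> 1 + r ^ p"
  proof (cases "cmod (ZZ x y) \<le> 1")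
    case True
    then have "cmod (ZZ x y) ^ p \<le> 1" by (simp add: power_le_one)
    moreover have "0 \<le> r ^ p" using r0 by simp
    ultimately show ?thesis by linarith
  next
    case False
    then have "cmod (ZZ x y) ^ p \<le> cmod (ZZ x y) ^ (2 * p)"
      by (intro power_increasing) auto
    also have "\<dots> = r ^ p" by (simp add: power_mult nr)
    finally show ?thesis by simp
  qed
  have b: "r ^ p \<le> 2 ^ p * fact p * exp (r / 2)"
  proof -
    have "(r/2) ^ p / fact p \<le> exp (r/2)" using r0 by (intro pow_div_fact_le_exp) auto
    then have "(r/2) ^ p \<le> fact p * exp (r/2)" by (simp add: field_simps)
    then have "2 ^ p * (r/2) ^ p \<le> 2 ^ p * (fact p * exp (r/2))" by simp
    moreover have "2 ^ p * (r/2) ^ p = r ^ p" by (simp add: power_divide)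
    ultimately show ?thesis by (simp add: mult.assoc)
  qed
  have g: "gau x * gau y = exp (- r / 2)" by (simp add: gau_def r_def flip: exp_add)
  have "cmod (ZZ x y) ^ p * exp (- r) \<le> (1 + 2 ^ p * fact p * exp (r / 2)) * exp (- r)"
    using a b by (intro mult_right_mono) auto
  also have "\<dots> = exp (- r) + 2 ^ p * fact p * exp (- r / 2)"
  proof -
    have "exp (r / 2) * exp (- r) = exp (- r / 2)" by (simp flip: exp_add)
    then show ?thesis by (simp add: distrib_right mult.assoc)
  qed
  also have "\<dots> \<le> exp (- r / 2) + 2 ^ p * fact p * exp (- r / 2)"
    using r0 by simp
  also have "\<dots> = (1 + 2 ^ p * fact p) * exp (- r / 2)" by (simp add: algebra_simps)
  finally show ?thesis by (simp add: r_def g)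
qed

definition EE :: "real \<Rightarrow> real \<Rightarrow> complex" where
  "EE x y = complex_of_real (exp (- (x\<^sup>2 + y\<^sup>2)))"

definition GG :: "nat \<Rightarrow> nat \<Rightarrow> real \<Rightarrow> real \<Rightarrow> complex" where
  "GG j k x y = ZZ x y ^ j * cnj (ZZ x y) ^ k * EE x y"

definition Dx :: "nat \<Rightarrow> nat \<Rightarrow> real \<Rightarrow> real \<Rightarrow> complex" where
  "Dx j k x y = (of_nat j * ZZ x y ^ (j - 1) * cnj (ZZ x y) ^ k + of_nat k * ZZ x y ^ j * cnj (ZZ x y) ^ (k - 1)
      - 2 * complex_of_real x * ZZ x y ^ j * cnj (ZZ x y) ^ k) * EE x y"

definition Dy :: "nat \<Rightarrow> nat \<Rightarrow> real \<Rightarrow> real \<Rightarrow> complex" where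
  "Dy j k x y = (\<i> * of_nat j * ZZ x y ^ (j - 1) * cnj (ZZ x y) ^ k - \<i> * of_nat k * ZZ x y ^ j * cnj (ZZ x y) ^ (k - 1)
      - 2 * complex_of_real y * ZZ x y ^ j * cnj (ZZ x y) ^ k) * EE x y"

lemma cnj_ZZ: "cnj (ZZ x y) = complex_of_real x - \<i> * complex_of_real y"
  by (simp add: ZZ_def)

lemma EE_eq: "EE x y = exp (- ((complex_of_real x)\<^sup>2 + (complex_of_real y)\<^sup>2))"
  by (simp add: EE_def flip: exp_of_real)

lemma norm_EE: "cmod (EE x y) = exp (- (x\<^sup>2 + y\<^sup>2))"
  by (simp add: EE_def)

lemma cont_EE[continuous_intros]: "continuous_on UNIV (\<lambda>p. EE (fst p) (snd p))"
  unfolding EE_def by (intro continuous_intros)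

lemma deriv_Dx: "((\<lambda>x. GG j k x y) has_vector_derivative Dx j k x y) (at x)"
proof -
  define h where "h w = (w + \<i> * complex_of_real y) ^ j * (w - \<i> * complex_of_real y) ^ k
      * exp (- (w\<^sup>2 + (complex_of_real y)\<^sup>2))" for w
  have "(h has_field_derivative
     (of_nat j * (w + \<i> * complex_of_real y) ^ (j - 1) * (w - \<i> * complex_of_real y) ^ k
       + of_nat k * (w + \<i> * complex_of_real y) ^ j * (w - \<i> * complex_of_real y) ^ (k - 1)
       - 2 * w * (w + \<i> * complex_of_real y) ^ j * (w - \<i> * complex_of_real y) ^ k)
      * exp (- (w\<^sup>2 + (complex_of_real y)\<^sup>2))) (at w)" for w
    unfolding h_def
    by (rule derivative_eq_intros refl | simp)+ (simp add: algebra_simps power2_eq_square)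
  from has_vector_derivative_real_field[OF this[of "complex_of_real x"]]
  show ?thesis
    by (simp add: h_def GG_def Dx_def ZZ_def EE_eq cnj_ZZ[unfolded ZZ_def])
qed

lemma deriv_Dy: "((\<lambda>y. GG j k x y) has_vector_derivative Dy j k x y) (at y)"
proof -
  define h where "h w = (complex_of_real x + \<i> * w) ^ j * (complex_of_real x - \<i> * w) ^ k
      * exp (- ((complex_of_real x)\<^sup>2 + w\<^sup>2))" for w
  have "(h has_field_derivative
     (\<i> * of_nat j * (complex_of_real x + \<i> * w) ^ (j - 1) * (complex_of_real x - \<i> * w) ^ k
       - \<i> * of_nat k * (complex_of_real x + \<i> * w) ^ j * (complex_of_real x - \<i> * w) ^ (k - 1)
       - 2 * w * (complex_of_real x + \<i> * w) ^ j * (complex_of_real x - \<i> * w) ^ k)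
      * exp (- ((complex_of_real x)\<^sup>2 + w\<^sup>2))) (at w)" for w
    unfolding h_def
    by (rule derivative_eq_intros refl | simp)+ (simp add: algebra_simps power2_eq_square)
  from has_vector_derivative_real_field[OF this[of "complex_of_real y"]]
  show ?thesis
    by (simp add: h_def GG_def Dy_def ZZ_def EE_eq cnj_ZZ[unfolded ZZ_def])
qed

lemma norm_ZZ_pow_EE: "cmod (ZZ x y ^ a * cnj (ZZ x y) ^ b * EE x y) \<le> (1 + 2 ^ (a+b) * fact (a+b)) * (gau x * gau y)"
proof -
  have "cmod (ZZ x y ^ a * cnj (ZZ x y) ^ b * EE x y) = cmod (ZZ x y) ^ (a + b) * exp (- (x\<^sup>2 + y\<^sup>2))"
    by (simp add: norm_mult norm_power norm_EE power_add)
  also have "\<dots> \<le> (1 + 2 ^ (a+b) * fact (a+b)) * (gau x * gau y)" by (rule poly_gauss_bound)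
  finally show ?thesis .
qed

lemma norm_re_le: "\<bar>x\<bar> \<le> cmod (ZZ x y)" "\<bar>y\<bar> \<le> cmod (ZZ x y)"
  by (simp_all add: ZZ_def abs_Re_le_cmod[of "Complex x y", simplified] abs_Im_le_cmod[of "Complex x y", simplified] Complex_eq[symmetric])

definition BB :: "nat \<Rightarrow> real" where "BB p = 1 + 2 ^ p * fact p"

lemma BB_pos: "0 < BB p" by (simp add: BB_def add_pos_nonneg)

lemma norm_term: "cmod (c * ZZ x y ^ a * cnj (ZZ x y) ^ b * EE x y) \<le> cmod c * BB (a+b) * (gau x * gau y)"
  using norm_ZZ_pow_EE[of x y a b] unfolding BB_def
  by (simp add: norm_mult mult.assoc mult_left_mono)

lemma norm_termx: "cmod (c * complex_of_real x * ZZ x y ^ a * cnj (ZZ x y) ^ b * EE x y) \<le> cmod c * BB (a+b+1) * (gau x * gau y)"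
proof -
  have "cmod (complex_of_real x * ZZ x y ^ a * cnj (ZZ x y) ^ b * EE x y) \<le> cmod (ZZ x y ^ (a+1) * cnj (ZZ x y) ^ b * EE x y)"
    using norm_re_le(1)[of x y]
    by (simp add: norm_mult norm_power mult.assoc mult_right_mono)
  also have "\<dots> \<le> BB (a+b+1) * (gau x * gau y)" using norm_ZZ_pow_EE[of x y "a+1" b] by (simp add: BB_def)
  finally show ?thesis by (simp add: norm_mult mult.assoc mult_left_mono)
qed

lemma norm_termy: "cmod (c * complex_of_real y * ZZ x y ^ a * cnj (ZZ x y) ^ b * EE x y) \<le> cmod c * BB (a+b+1) * (gau x * gau y)"
proof -
  have "cmod (complex_of_real y * ZZ x y ^ a * cnj (ZZ x y) ^ b * EE x y) \<le> cmod (ZZ x y ^ (a+1) * cnj (ZZ x y) ^ b * EE x y)"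
    using norm_re_le(2)[of y x]
    by (simp add: norm_mult norm_power mult.assoc mult_right_mono)
  also have "\<dots> \<le> BB (a+b+1) * (gau x * gau y)" using norm_ZZ_pow_EE[of x y "a+1" b] by (simp add: BB_def)
  finally show ?thesis by (simp add: norm_mult mult.assoc mult_left_mono)
qed

lemma tri3: "cmod (a + b - c) \<le> cmod a + cmod b + cmod c"
  using norm_triangle_ineq4[of "a+b" c] norm_triangle_ineq[of a b] by linarith
lemma tri3': "cmod (a - b - c) \<le> cmod a + cmod b + cmod c"
  using norm_triangle_ineq4[of "a-b" c] norm_triangle_ineq4[of a b] by linarith

definition CD :: "nat \<Rightarrow> nat \<Rightarrow> real" where
  "CD j k = of_nat j * BB (j - 1 + k) + of_nat k * BB (j + (k - 1)) + 2 * BB (j + k + 1)"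

lemma norm_Dx: "cmod (Dx j k x y) \<le> CD j k * (gau x * gau y)"
proof -
  have e: "Dx j k x y = of_nat j * ZZ x y ^ (j - 1) * cnj (ZZ x y) ^ k * EE x y
     + of_nat k * ZZ x y ^ j * cnj (ZZ x y) ^ (k - 1) * EE x y
     - 2 * complex_of_real x * ZZ x y ^ j * cnj (ZZ x y) ^ k * EE x y"
    by (simp add: Dx_def algebra_simps)
  have "cmod (Dx j k x y) \<le> cmod (of_nat j * ZZ x y ^ (j - 1) * cnj (ZZ x y) ^ k * EE x y)
     + cmod (of_nat k * ZZ x y ^ j * cnj (ZZ x y) ^ (k - 1) * EE x y)
     + cmod (2 * complex_of_real x * ZZ x y ^ j * cnj (ZZ x y) ^ k * EE x y)"
    unfolding e by (rule tri3)
  also have "\<dots> \<le> CD j k * (gau x * gau y)"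
    using norm_term[of "of_nat j" x y "j - 1" k] norm_term[of "of_nat k" x y j "k - 1"] norm_termx[of 2 x y j k]
    unfolding CD_def by (simp only: norm_of_nat distrib_right norm_numeral; linarith)
  finally show ?thesis .
qed

lemma norm_Dy: "cmod (Dy j k x y) \<le> CD j k * (gau x * gau y)"
proof -
  have e: "Dy j k x y = (\<i> * of_nat j) * ZZ x y ^ (j - 1) * cnj (ZZ x y) ^ k * EE x y
     - (\<i> * of_nat k) * ZZ x y ^ j * cnj (ZZ x y) ^ (k - 1) * EE x y
     - 2 * complex_of_real y * ZZ x y ^ j * cnj (ZZ x y) ^ k * EE x y"
    by (simp add: Dy_def algebra_simps)
  have "cmod (Dy j k x y) \<le> cmod ((\<i> * of_nat j) * ZZ x y ^ (j - 1) * cnj (ZZ x y) ^ k * EE x y)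
     + cmod ((\<i> * of_nat k) * ZZ x y ^ j * cnj (ZZ x y) ^ (k - 1) * EE x y)
     + cmod (2 * complex_of_real y * ZZ x y ^ j * cnj (ZZ x y) ^ k * EE x y)"
    unfolding e by (rule tri3')
  also have "\<dots> \<le> CD j k * (gau x * gau y)"
    using norm_term[of "\<i> * of_nat j" x y "j - 1" k] norm_term[of "\<i> * of_nat k" x y j "k - 1"] norm_termy[of 2 y x j k]
    unfolding CD_def by (simp only: norm_of_nat distrib_right norm_numeral norm_mult norm_ii mult_1; linarith)
  finally show ?thesis .
qed

lemma norm_GG: "cmod (GG j k x y) \<le> BB (j + k) * (gau x * gau y)"
  using norm_term[of 1 x y j k] by (simp add: GG_def)

lemma cont_GG: "continuous_on UNIV (\<lambda>p. GG j k (fst p) (snd p))"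
  unfolding GG_def by (intro continuous_intros)
lemma cont_Dx: "continuous_on UNIV (\<lambda>p. Dx j k (fst p) (snd p))"
  unfolding Dx_def by (intro continuous_intros)
lemma cont_Dy: "continuous_on UNIV (\<lambda>p. Dy j k (fst p) (snd p))"
  unfolding Dy_def by (intro continuous_intros)

lemma cont_fix1: fixes F :: "real \<Rightarrow> real \<Rightarrow> complex" shows "continuous_on UNIV (\<lambda>p. F (fst p) (snd p)) \<Longrightarrow> continuous_on UNIV (\<lambda>x. F x y)"
proof -
  assume a: "continuous_on UNIV (\<lambda>p. F (fst p) (snd p))"
  have "continuous_on UNIV (\<lambda>x::real. (x, y))" by (intro continuous_intros)
  from continuous_on_compose2[OF a this] show ?thesis by simp
qed
lemma cont_fix2: fixes F :: "real \<Rightarrow> real \<Rightarrow> complex" shows "continuous_on UNIV (\<lambda>p. F (fst p) (snd p)) \<Longrightarrow> continuous_on UNIV (\<lambda>y. F x y)"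
proof -
  assume a: "continuous_on UNIV (\<lambda>p. F (fst p) (snd p))"
  have "continuous_on UNIV (\<lambda>y::real. (x, y))" by (intro continuous_intros)
  from continuous_on_compose2[OF a this] show ?thesis by simp
qed

lemma integrable_1D:
  fixes g :: "real \<Rightarrow> complex"
  assumes "continuous_on UNIV g" "\<And>x. cmod (g x) \<le> C * gau x"
  shows "integrable lborel g"
proof (rule Bochner_Integration.integrable_bound)
  show "integrable lborel (\<lambda>x. C * gau x)" using integrable_gau by (rule integrable_mult_right)
  show "g \<in> borel_measurable lborel" using assms(1) by (simp add: borel_measurable_continuous_onI)
  show "AE x in lborel. norm (g x) \<le> norm (C * gau x)"
    using assms(2) by (auto intro!: AE_I2 order_trans[OF _ abs_ge_self])
qed

lemma gau_lim: "(gau \<longlongrightarrow> 0) at_top" "(gau \<longlongrightarrow> 0) at_bot"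
  unfolding gau_def by real_asymp+

lemma GG_lim:
  "((\<lambda>x. GG j k x y) \<longlongrightarrow> 0) at_top" "((\<lambda>x. GG j k x y) \<longlongrightarrow> 0) at_bot"
  "((\<lambda>y. GG j k x y) \<longlongrightarrow> 0) at_top" "((\<lambda>y. GG j k x y) \<longlongrightarrow> 0) at_bot"
proof -
  have A: "((\<lambda>x. GG j k x y) \<longlongrightarrow> 0) F" if "(gau \<longlongrightarrow> 0) F" for F
  proof (rule Lim_null_comparison[OF always_eventually])
    show "\<forall>x. norm (GG j k x y) \<le> BB (j+k) * gau y * gau x"
    proof
      fix x show "norm (GG j k x y) \<le> BB (j+k) * gau y * gau x" using norm_GG[of j k x y] by (simp add: mult_ac)
    qed
    show "((\<lambda>x. BB (j+k) * gau y * gau x) \<longlongrightarrow> 0) F"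
      using tendsto_mult_right_zero[OF that] by simp
  qed
  have B: "((\<lambda>y. GG j k x y) \<longlongrightarrow> 0) F" if "(gau \<longlongrightarrow> 0) F" for F
  proof (rule Lim_null_comparison[OF always_eventually])
    show "\<forall>y. norm (GG j k x y) \<le> BB (j+k) * gau x * gau y"
    proof
      fix y show "norm (GG j k x y) \<le> BB (j+k) * gau x * gau y" using norm_GG[of j k x y] by (simp add: mult_ac)
    qed
    show "((\<lambda>y. BB (j+k) * gau x * gau y) \<longlongrightarrow> 0) F"
      using tendsto_mult_right_zero[OF that] by simp
  qed
  show "((\<lambda>x. GG j k x y) \<longlongrightarrow> 0) at_top" "((\<lambda>x. GG j k x y) \<longlongrightarrow> 0) at_bot"
    "((\<lambda>y. GG j k x y) \<longlongrightarrow> 0) at_top" "((\<lambda>y. GG j k x y) \<longlongrightarrow> 0) at_bot"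
    using A B gau_lim by auto
qed

abbreviation P2 :: "(real \<times> real) measure" where "P2 \<equiv> lborel \<Otimes>\<^sub>M lborel"

lemma int_Dx_zero: "integral\<^sup>L lborel (\<lambda>x. Dx j k x y) = 0"
proof (rule integral_deriv_zero[OF deriv_Dx])
  show "continuous_on UNIV (\<lambda>x. Dx j k x y)" by (rule cont_fix1[OF cont_Dx])
  show "integrable lborel (\<lambda>x. Dx j k x y)"
    by (rule integrable_1D[where C="CD j k * gau y"]) (rule cont_fix1[OF cont_Dx], use norm_Dx[of j k _ y] in \<open>simp add: mult_ac\<close>)
qed (rule GG_lim)+

lemma int_Dy_zero: "integral\<^sup>L lborel (\<lambda>y. Dy j k x y) = 0"
proof (rule integral_deriv_zero[OF deriv_Dy])
  show "continuous_on UNIV (\<lambda>y. Dy j k x y)" by (rule cont_fix2[OF cont_Dy])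
  show "integrable lborel (\<lambda>y. Dy j k x y)"
    by (rule integrable_1D[where C="CD j k * gau x"]) (rule cont_fix2[OF cont_Dy], use norm_Dy[of j k x] in \<open>simp add: mult_ac\<close>)
qed (rule GG_lim)+

lemma split_eta: "(\<lambda>(x, y). F x y) = (\<lambda>p. F (fst p) (snd p))"
  by (simp add: fun_eq_iff split_beta)

lemma int_P2_Dx: "integrable P2 (\<lambda>(x, y). Dx j k x y)"
  unfolding split_eta by (rule integrable_P2_bound[OF cont_Dx], simp only: fst_conv snd_conv, rule norm_Dx)
lemma int_P2_Dy: "integrable P2 (\<lambda>(x, y). Dy j k x y)"
  unfolding split_eta by (rule integrable_P2_bound[OF cont_Dy], simp only: fst_conv snd_conv, rule norm_Dy)
lemma int_P2_GG: "integrable P2 (\<lambda>(x, y). GG j k x y)"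
  unfolding split_eta by (rule integrable_P2_bound[OF cont_GG], simp only: fst_conv snd_conv, rule norm_GG)

lemma P2_Dx_zero: "integral\<^sup>L P2 (\<lambda>(x, y). Dx j k x y) = 0"
  using lborel_pair.integral_snd[OF int_P2_Dx] int_Dx_zero by simp
lemma P2_Dy_zero: "integral\<^sup>L P2 (\<lambda>(x, y). Dy j k x y) = 0"
  using lborel_pair.integral_fst[OF int_P2_Dy] int_Dy_zero by simp

definition LL :: "nat \<Rightarrow> nat \<Rightarrow> complex" where
  "LL j k = integral\<^sup>L P2 (\<lambda>(x, y). GG j k x y)"

lemma DxDy1: "Dx j k x y + \<i> * Dy j k x y = 2 * of_nat k * GG j (k - 1) x y - 2 * GG (j + 1) k x y"
  by (simp add: Dx_def Dy_def GG_def ZZ_def algebra_simps)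

lemma DxDy2: "Dx j k x y - \<i> * Dy j k x y = 2 * of_nat j * GG (j - 1) k x y - 2 * GG j (k + 1) x y"
  by (simp add: Dx_def Dy_def GG_def ZZ_def algebra_simps)

lemma LL_rel1: "LL (j + 1) k = of_nat k * LL j (k - 1)"
proof -
  have e: "(\<lambda>(x, y). Dx j k x y + \<i> * Dy j k x y) = (\<lambda>p. (\<lambda>(x, y). Dx j k x y) p + \<i> * (\<lambda>(x, y). Dy j k x y) p)"
    by auto
  have "integral\<^sup>L P2 (\<lambda>(x, y). Dx j k x y + \<i> * Dy j k x y) = 0"
    unfolding e using P2_Dx_zero[of j k] P2_Dy_zero[of j k] int_P2_Dx[of j k] int_P2_Dy[of j k]
    by (subst Bochner_Integration.integral_add) (auto intro: integrable_mult_right)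
  also have "(\<lambda>(x, y). Dx j k x y + \<i> * Dy j k x y) = (\<lambda>p. (2 * of_nat k) * (\<lambda>(x, y). GG j (k - 1) x y) p - 2 * (\<lambda>(x, y). GG (j + 1) k x y) p)"
    by (auto simp: DxDy1)
  also have "integral\<^sup>L P2 \<dots> = 2 * of_nat k * LL j (k - 1) - 2 * LL (j + 1) k"
    using int_P2_GG[of j "k - 1"] int_P2_GG[of "j + 1" k] unfolding LL_def
    by (subst Bochner_Integration.integral_diff) (auto intro: integrable_mult_right)
  finally show ?thesis by simp
qed

lemma LL_rel2: "LL j (k + 1) = of_nat j * LL (j - 1) k"
proof -
  have e: "(\<lambda>(x, y). Dx j k x y - \<i> * Dy j k x y) = (\<lambda>p. (\<lambda>(x, y). Dx j k x y) p - \<i> * (\<lambda>(x, y). Dy j k x y) p)"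
    by auto
  have "integral\<^sup>L P2 (\<lambda>(x, y). Dx j k x y - \<i> * Dy j k x y) = 0"
    unfolding e using P2_Dx_zero[of j k] P2_Dy_zero[of j k] int_P2_Dx[of j k] int_P2_Dy[of j k]
    by (subst Bochner_Integration.integral_diff) (auto intro: integrable_mult_right)
  also have "(\<lambda>(x, y). Dx j k x y - \<i> * Dy j k x y) = (\<lambda>p. (2 * of_nat j) * (\<lambda>(x, y). GG (j - 1) k x y) p - 2 * (\<lambda>(x, y). GG j (k + 1) x y) p)"
    by (auto simp: DxDy2)
  also have "integral\<^sup>L P2 \<dots> = 2 * of_nat j * LL (j - 1) k - 2 * LL j (k + 1)"
    using int_P2_GG[of "j - 1" k] int_P2_GG[of j "k + 1"] unfolding LL_def
    by (subst Bochner_Integration.integral_diff) (auto intro: integrable_mult_right)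
  finally show ?thesis by simp
qed

lemma LL_eq: "LL j k = (if j = k then fact k * LL 0 0 else 0)"
proof (induction j arbitrary: k)
  case 0
  then show ?case using LL_rel2[of 0] by (cases k) auto
next
  case (Suc j)
  show ?case
  proof (cases k)
    case 0
    then show ?thesis using LL_rel1[of j 0] by simp
  next
    case (Suc k')
    then show ?thesis using LL_rel1[of j k] Suc.IH[of k'] by (simp add: algebra_simps)
  qed
qed

lemma pointwise_expand:
  "complex_of_real ((cmod (\<Sum>k<N. a k * ZZ x y ^ k))\<^sup>2 * exp (- (x\<^sup>2 + y\<^sup>2)))
   = (\<Sum>j<N. \<Sum>k<N. (a j * cnj (a k)) * GG j k x y)"
proof -
  have "complex_of_real ((cmod (\<Sum>k<N. a k * ZZ x y ^ k))\<^sup>2 * exp (- (x\<^sup>2 + y\<^sup>2)))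
      = (\<Sum>k<N. a k * ZZ x y ^ k) * cnj (\<Sum>k<N. a k * ZZ x y ^ k) * EE x y"
    by (simp only: of_real_mult complex_norm_square EE_def)
  also have "\<dots> = (\<Sum>j<N. \<Sum>k<N. (a j * cnj (a k)) * GG j k x y)"
    unfolding cnj_sum complex_cnj_mult complex_cnj_power sum_product sum_distrib_right GG_def
    by (intro sum.cong refl) (simp add: sum_distrib_left mult_ac)
  finally show ?thesis .
qed

lemma poly_norm:
  "integral\<^sup>L P2 (\<lambda>(x, y). complex_of_real ((cmod (\<Sum>k<N. a k * ZZ x y ^ k))\<^sup>2 * exp (- (x\<^sup>2 + y\<^sup>2))))
   = (\<Sum>k<N. complex_of_real ((cmod (a k))\<^sup>2 * fact k)) * LL 0 0"
proof -
  have "integral\<^sup>L P2 (\<lambda>(x, y). complex_of_real ((cmod (\<Sum>k<N. a k * ZZ x y ^ k))\<^sup>2 * exp (- (x\<^sup>2 + y\<^sup>2))))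
      = integral\<^sup>L P2 (\<lambda>p. \<Sum>j<N. \<Sum>k<N. (a j * cnj (a k)) * (\<lambda>(x, y). GG j k x y) p)"
    by (rule Bochner_Integration.integral_cong[OF refl]) (clarify, simp only: prod.case pointwise_expand)
  also have "\<dots> = (\<Sum>j<N. \<Sum>k<N. (a j * cnj (a k)) * LL j k)"
    unfolding LL_def
    by (subst Bochner_Integration.integral_sum, use int_P2_GG in \<open>auto intro!: integrable_mult_right Bochner_Integration.integrable_sum\<close>)
  also have "\<dots> = (\<Sum>k<N. (a k * cnj (a k)) * (fact k * LL 0 0))"
    by (subst LL_eq) (simp add: if_distrib sum.delta cong: if_cong)
  also have "\<dots> = (\<Sum>k<N. complex_of_real ((cmod (a k))\<^sup>2 * fact k)) * LL 0 0"
  proof -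
    have "\<And>k. complex_of_real ((cmod (a k))\<^sup>2 * fact k) = a k * cnj (a k) * fact k"
      by (simp only: of_real_mult complex_norm_square of_real_fact)
    then show ?thesis by (simp add: sum_distrib_right sum_distrib_left mult_ac)
  qed
  finally show ?thesis .
qed

lemma ZZ_Complex: "ZZ x y = Complex x y"
  by (simp add: ZZ_def Complex_eq)

lemma series_bargmann:
  fixes a :: "nat \<Rightarrow> complex"
  assumes summ: "summable (\<lambda>k. (cmod (a k))\<^sup>2 * fact k)"
    and conv: "\<And>z. summable (\<lambda>k. a k * z ^ k)"
  shows "integrable lborel (\<lambda>z. (cmod (\<Sum>k. a k * z ^ k))\<^sup>2 * exp (- (cmod z)\<^sup>2))"
proof -
  define phi where "phi z = (\<Sum>k. a k * z ^ k)" for z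
  have cphi: "continuous_on UNIV phi"
  proof -
    have "isCont phi z" for z
      unfolding phi_def by (rule DERIV_isCont[OF termdiffs_strong_converges_everywhere[OF conv]])
    then show ?thesis by (simp add: continuous_at_imp_continuous_on)
  qed
  define f where "f p = (cmod (phi (ZZ (fst p) (snd p))))\<^sup>2 * exp (- ((fst p)\<^sup>2 + (snd p)\<^sup>2))" for p
  define s where "s N p = (cmod (\<Sum>k<N. a k * ZZ (fst p) (snd p) ^ k))\<^sup>2 * exp (- ((fst p)\<^sup>2 + (snd p)\<^sup>2))" for N p
  define c where "c = Re (LL 0 0)"
  define S where "S = (\<Sum>k. (cmod (a k))\<^sup>2 * fact k)"
  have fmeas: "f \<in> borel_measurable P2"
    unfolding f_def by (intro measurable_P2_cont continuous_intros continuous_on_compose2[OF cphi]) auto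
  have smeas: "s N \<in> borel_measurable P2" for N
    unfolding s_def by (intro measurable_P2_cont continuous_intros)
  have scx: "(\<lambda>p. complex_of_real (s N p)) = (\<lambda>(x, y). \<Sum>j<N. \<Sum>k<N. (a j * cnj (a k)) * GG j k x y)" for N
  proof (rule ext)
    fix p show "complex_of_real (s N p) = (\<lambda>(x, y). \<Sum>j<N. \<Sum>k<N. (a j * cnj (a k)) * GG j k x y) p"
      by (cases p) (simp only: s_def fst_conv snd_conv prod.case pointwise_expand)
  qed
  have sint_c: "integrable P2 (\<lambda>p. complex_of_real (s N p))" for N
  proof -
    have "integrable P2 (\<lambda>p. \<Sum>j<N. \<Sum>k<N. (a j * cnj (a k)) * (\<lambda>(x, y). GG j k x y) p)"
      using int_P2_GG by (auto intro!: integrable_mult_right Bochner_Integration.integrable_sum)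
    then show ?thesis unfolding scx by (simp only: split_eta fst_conv snd_conv)
  qed
  have sint: "integrable P2 (s N)" for N
    using integrable_Re[OF sint_c[of N]] by simp
  have sval: "integral\<^sup>L P2 (s N) = (\<Sum>k<N. (cmod (a k))\<^sup>2 * fact k) * c" for N
  proof -
    have "complex_of_real (integral\<^sup>L P2 (s N)) = integral\<^sup>L P2 (\<lambda>p. complex_of_real (s N p))" by simp
    also have "(\<lambda>p. complex_of_real (s N p)) = (\<lambda>(x, y). complex_of_real ((cmod (\<Sum>k<N. a k * ZZ x y ^ k))\<^sup>2 * exp (- (x\<^sup>2 + y\<^sup>2))))"
      by (auto simp: s_def fun_eq_iff)
    also have "integral\<^sup>L P2 \<dots> = (\<Sum>k<N. complex_of_real ((cmod (a k))\<^sup>2 * fact k)) * LL 0 0"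
      by (rule poly_norm)
    finally have "integral\<^sup>L P2 (s N) = Re ((\<Sum>k<N. complex_of_real ((cmod (a k))\<^sup>2 * fact k)) * LL 0 0)"
      by (metis Re_complex_of_real)
    also have "\<dots> = (\<Sum>k<N. (cmod (a k))\<^sup>2 * fact k) * c"
      by (simp add: c_def flip: of_real_sum)
    finally show ?thesis .
  qed
  have sbound: "ennreal (s N p) \<le> ennreal (s N p)" for N p by simp
  have nn_s: "(\<integral>\<^sup>+p. ennreal (s N p) \<partial>P2) \<le> ennreal (\<bar>c\<bar> * S)" for N
  proof -
    have "(\<integral>\<^sup>+p. ennreal (s N p) \<partial>P2) = ennreal (integral\<^sup>L P2 (s N))"
      by (rule nn_integral_eq_integral[OF sint]) (simp add: s_def)
    also have "\<dots> \<le> ennreal (\<bar>c\<bar> * S)"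
    proof (rule ennreal_leI)
      have "(\<Sum>k<N. (cmod (a k))\<^sup>2 * fact k) \<le> S"
        unfolding S_def by (rule sum_le_suminf[OF summ]) auto
      moreover have "0 \<le> (\<Sum>k<N. (cmod (a k))\<^sup>2 * fact k)" by (intro sum_nonneg) auto
      ultimately have "(\<Sum>k<N. (cmod (a k))\<^sup>2 * fact k) * c \<le> S * \<bar>c\<bar>"
      proof -
        note A = \<open>(\<Sum>k<N. (cmod (a k))\<^sup>2 * fact k) \<le> S\<close> \<open>0 \<le> (\<Sum>k<N. (cmod (a k))\<^sup>2 * fact k)\<close>
        have "(\<Sum>k<N. (cmod (a k))\<^sup>2 * fact k) * c \<le> (\<Sum>k<N. (cmod (a k))\<^sup>2 * fact k) * \<bar>c\<bar>"
          using A(2) by (intro mult_left_mono) auto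
        also have "\<dots> \<le> S * \<bar>c\<bar>" using A(1) by (intro mult_right_mono) auto
        finally show ?thesis .
      qed
      then show "integral\<^sup>L P2 (s N) \<le> \<bar>c\<bar> * S" by (simp add: sval mult.commute)
    qed
    finally show ?thesis .
  qed
  have lim: "(\<lambda>N. ennreal (s N p)) \<longlonglongrightarrow> ennreal (f p)" for p
  proof -
    have "(\<lambda>N. \<Sum>k<N. a k * ZZ (fst p) (snd p) ^ k) \<longlonglongrightarrow> phi (ZZ (fst p) (snd p))"
      unfolding phi_def using conv summable_LIMSEQ by blast
    then have "(\<lambda>N. s N p) \<longlonglongrightarrow> f p" unfolding s_def f_def by (intro tendsto_intros)
    then show ?thesis by (rule tendsto_ennrealI)
  qed
  have "(\<integral>\<^sup>+p. ennreal (f p) \<partial>P2) = (\<integral>\<^sup>+p. liminf (\<lambda>N. ennreal (s N p)) \<partial>P2)"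
    by (intro nn_integral_cong) (simp add: lim_imp_Liminf[OF _ lim])
  also have "\<dots> \<le> liminf (\<lambda>N. \<integral>\<^sup>+p. ennreal (s N p) \<partial>P2)"
    by (rule nn_integral_liminf) (use smeas in auto)
  also have "\<dots> \<le> ennreal (\<bar>c\<bar> * S)"
    by (rule Liminf_le) (simp_all add: always_eventually nn_s)
  also have "\<dots> < \<infinity>" by simp
  finally have fint: "integrable P2 f"
    by (intro integrableI_nonneg fmeas) (auto simp: f_def)
  have m: "(\<lambda>p. Complex (fst p) (snd p)) \<in> P2 \<rightarrow>\<^sub>M (borel :: complex measure)"
  proof -
    have "(\<lambda>p. Complex (fst p) (snd p)) \<in> (borel :: (real*real) measure) \<rightarrow>\<^sub>M (borel :: complex measure)"
      by (intro borel_measurable_continuous_onI continuous_intros)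
    then show ?thesis by (simp add: lborel_prod)
  qed
  have gmeas: "(\<lambda>z. (cmod (phi z))\<^sup>2 * exp (- (cmod z)\<^sup>2)) \<in> borel_measurable borel"
    by (intro borel_measurable_continuous_onI continuous_intros continuous_on_compose2[OF cphi]) auto
  have "integrable (distr P2 borel (\<lambda>p. Complex (fst p) (snd p))) (\<lambda>z. (cmod (phi z))\<^sup>2 * exp (- (cmod z)\<^sup>2))"
  proof -
    have e: "(\<lambda>p. (cmod (phi (Complex (fst p) (snd p))))\<^sup>2 * exp (- (cmod (Complex (fst p) (snd p)))\<^sup>2)) = f"
      by (simp only: f_def fun_eq_iff ZZ_Complex norm_ZZ_sq[unfolded ZZ_Complex]) simp
    show ?thesis using fint by (subst integrable_distr_eq[OF m gmeas]) (simp only: e)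
  qed
  then show ?thesis unfolding lborel_complex_eq phi_def .
qed

definition ft :: "nat \<Rightarrow> real \<Rightarrow> real" where
  "ft n s = s ^ (n - 1) * exp (- (s\<^sup>2) / 2) / sqrt (fact n)"

definition GI :: "nat \<Rightarrow> real \<Rightarrow> real" where
  "GI n t = (LBINT s:{t..}. ft n s)"

fun hc :: "nat \<Rightarrow> nat \<Rightarrow> real" where
  "hc n 0 = GI n 0"
| "hc n (Suc 0) = - (if n - 1 = 0 then 1 / sqrt (fact n) else 0)"
| "hc n (Suc (Suc k)) = (hc n k - (if Suc k = n - 1 then 1 / sqrt (fact n) else 0)) / (real k + 2)"

definition QQ :: "nat \<Rightarrow> nat \<Rightarrow> real" where
  "QQ n k = hc n k ^ 4 * (fact k)\<^sup>2 * (real k + 1)"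

lemma QQ_nonneg: "0 \<le> QQ n k"
  by (simp add: QQ_def)

lemma QQ_aux0: "(d::real) \<noteq> 0 \<Longrightarrow> (H/d)^4 * (d*E*F)\<^sup>2 * G = H^4*F\<^sup>2*(E\<^sup>2*G/d\<^sup>2)"
  by (simp add: power_divide power_mult_distrib field_simps power2_eq_square power4_eq_xxxx)

lemma QQ_aux: "(K::real) + 2 \<noteq> 0 \<Longrightarrow> (H/(K+2))^4 * ((K+2)*(K+1)*F)\<^sup>2 * (K+2+1) = H^4*F\<^sup>2*((K+1)\<^sup>2*(K+3)/(K+2)\<^sup>2)"
  using QQ_aux0[of "K+2" H "K+1" F "K+2+1"] by (simp add: add.assoc)

lemma QQ_step:
  assumes "n - 1 \<le> k"
  shows "QQ n (k + 2) \<le> QQ n k"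
proof -
  have h: "hc n (k + 2) = hc n k / (real k + 2)" using assms by simp
  have f: "fact (k + 2) = (real k + 2) * (real k + 1) * (fact k :: real)"
    by (simp add: algebra_simps)
  have "QQ n (k + 2) = hc n k ^ 4 * (fact k)\<^sup>2 * ((real k + 1)\<^sup>2 * (real k + 3) / (real k + 2)\<^sup>2)"
    unfolding QQ_def h f using QQ_aux[of "real k" "hc n k" "fact k"] by simp
  also have "\<dots> \<le> hc n k ^ 4 * (fact k)\<^sup>2 * (real k + 1)"
  proof (rule mult_left_mono)
    have "(real k + 1)\<^sup>2 * (real k + 3) \<le> (real k + 1) * (real k + 2)\<^sup>2"
      by (simp add: power2_eq_square algebra_simps)
    then show "(real k + 1)\<^sup>2 * (real k + 3) / (real k + 2)\<^sup>2 \<le> real k + 1"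
      by (simp add: divide_le_eq)
  qed (simp)
  finally show ?thesis by (simp add: QQ_def)
qed

lemma QQ_bound:
  assumes "1 \<le> n"
  shows "QQ n k \<le> Max (QQ n ` {..n})"
proof (induction k rule: less_induct)
  case (less k)
  show ?case
  proof (cases "k \<le> n")
    case True then show ?thesis by (intro Max_ge) auto
  next
    case False
    define j where "j = k - 2"
    have j: "k = j + 2" "n - 1 \<le> j" using False assms unfolding j_def by arith+
    have "QQ n k \<le> QQ n j" using QQ_step[OF j(2)] j(1) by simp
    also have "\<dots> \<le> Max (QQ n ` {..n})" using less.IH[of j] j(1) by simp
    finally show ?thesis .
  qed
qed

definition TT :: "nat \<Rightarrow> nat \<Rightarrow> real" where
  "TT n k = hc n k ^ 2 * fact k / (real k + 1)"

lemma TT_nonneg: "0 \<le> TT n k" by (simp add: TT_def)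

lemma TT_aux: "(d::real) \<noteq> 0 \<Longrightarrow> (a / d)\<^sup>2 * d ^ 3 = a\<^sup>2 * d"
  by (simp add: power_divide power2_eq_square power3_eq_cube)

lemma TT_sq: "(TT n k)\<^sup>2 * (real k + 1) ^ 3 = QQ n k"
proof -
  have "(TT n k)\<^sup>2 * (real k + 1) ^ 3 = (hc n k ^ 2 * fact k)\<^sup>2 * (real k + 1)"
    unfolding TT_def by (rule TT_aux) simp
  also have "\<dots> = QQ n k" by (simp add: QQ_def power_mult_distrib flip: power_mult)
  finally show ?thesis .
qed

lemma sqrt_inv_cube: "0 < (x::real) \<Longrightarrow> sqrt (1 / x ^ 3) = x powr (- 3 / 2)"
proof -
  assume x: "0 < x"
  have "x powr (- 3 / 2) = (x powr (- 3)) powr (1/2)" using x by (simp add: powr_powr)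
  also have "\<dots> = sqrt (x powr (- 3))" using x by (simp add: powr_half_sqrt)
  also have "x powr (- 3) = 1 / x ^ 3" using x by (simp add: powr_minus_divide powr_realpow)
  finally show ?thesis by simp
qed

lemma summable_pow32: "summable (\<lambda>k. sqrt (1 / (real k + 1) ^ 3))"
proof -
  have "summable (\<lambda>k. real k powr (- 3 / 2))" by (simp add: summable_real_powr_iff)
  then have "summable (\<lambda>k. real (Suc k) powr (- 3 / 2))" by (subst summable_Suc_iff)
  moreover have "real (Suc k) powr (- 3 / 2) = sqrt (1 / (real k + 1) ^ 3)" for k
    by (subst sqrt_inv_cube) (auto simp: add.commute)
  ultimately show ?thesis by simp
qed

lemma summable_TT:
  assumes "1 \<le> n" shows "summable (TT n)"
proof (rule summable_comparison_test')
  define M where "M = Max (QQ n ` {..n})"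
  show "summable (\<lambda>k. sqrt M * sqrt (1 / (real k + 1) ^ 3))"
    by (intro summable_mult summable_pow32)
  show "norm (TT n k) \<le> sqrt M * sqrt (1 / (real k + 1) ^ 3)" for k
  proof -
    have q: "QQ n k \<le> M" unfolding M_def using QQ_bound[OF assms] .
    have "TT n k = sqrt ((TT n k)\<^sup>2)" using TT_nonneg by simp
    also have "(TT n k)\<^sup>2 = QQ n k / (real k + 1) ^ 3" using TT_sq[of n k] by (simp add: field_simps)
    also have "sqrt (QQ n k / (real k + 1) ^ 3) \<le> sqrt (M / (real k + 1) ^ 3)"
      using q by (intro real_sqrt_le_mono divide_right_mono) auto
    also have "\<dots> = sqrt M * sqrt (1 / (real k + 1) ^ 3)" by (simp add: real_sqrt_divide)
    finally show ?thesis using TT_nonneg by simp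
  qed
qed

lemma amgm: assumes "0 \<le> T" "0 \<le> U" "(x::real)\<^sup>2 = T * U" shows "\<bar>x\<bar> \<le> (T + U) / 2"
proof (rule power2_le_imp_le)
  have "(T + U)\<^sup>2 / 4 - T * U = (T - U)\<^sup>2 / 4" by (simp add: power2_eq_square field_simps)
  then have "T * U \<le> ((T + U) / 2)\<^sup>2" by (simp add: power_divide) (metis diff_ge_0_iff_ge divide_nonneg_pos zero_le_power2 zero_less_numeral)
  then show "\<bar>x\<bar>\<^sup>2 \<le> ((T + U) / 2)\<^sup>2" using assms by simp
qed (use assms in auto)

lemma summable_kexp: "summable (\<lambda>k. (real k + 1) * x ^ k / fact k)"
proof -
  have s1: "summable (\<lambda>k. x ^ k / fact k :: real)"
    using summable_exp_generic[of x] by (simp add: divide_inverse mult.commute)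
  have "summable (\<lambda>j. x * (x ^ j / fact j))" by (intro summable_mult s1)
  moreover have "real (Suc j) * x ^ Suc j / fact (Suc j) = x * (x ^ j / fact j)" for j
  proof -
    have "fact (Suc j) = real (Suc j) * fact j" by simp
    then show ?thesis by (simp only:) (simp add: divide_simps del: of_nat_Suc)
  qed
  ultimately have "summable (\<lambda>j. real (Suc j) * x ^ Suc j / fact (Suc j))" by simp
  then have s2: "summable (\<lambda>k. real k * x ^ k / fact k)" by (subst summable_Suc_iff[symmetric])
  have "summable (\<lambda>k. real k * x ^ k / fact k + x ^ k / fact k)" by (intro summable_add s1 s2)
  moreover have "real k * x ^ k / fact k + x ^ k / fact k = (real k + 1) * x ^ k / fact k" for k
    by (simp add: add_divide_distrib distrib_right)
  ultimately show ?thesis by simp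
qed

lemma sq_aux: "(d::real) \<noteq> 0 \<Longrightarrow> f \<noteq> 0 \<Longrightarrow> (h * p)\<^sup>2 = (h\<^sup>2 * f / d) * (d * p\<^sup>2 / f)"
  by (simp add: power_mult_distrib)

lemma summable_hc_abs:
  assumes "1 \<le> n" shows "summable (\<lambda>k. \<bar>hc n k * t ^ k\<bar>)"
proof (rule summable_comparison_test')
  show "summable (\<lambda>k. (TT n k + (real k + 1) * (t\<^sup>2) ^ k / fact k) / 2)"
    by (intro summable_divide summable_add summable_TT[OF assms] summable_kexp)
  show "norm \<bar>hc n k * t ^ k\<bar> \<le> (TT n k + (real k + 1) * (t\<^sup>2) ^ k / fact k) / 2" for k
  proof -
    have "(hc n k * t ^ k)\<^sup>2 = TT n k * ((real k + 1) * (t\<^sup>2) ^ k / fact k)"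
      unfolding TT_def using sq_aux[of "real k + 1" "fact k" "hc n k" "t ^ k"]
      by (simp add: power_mult[symmetric] mult.commute[of 2])
    from amgm[OF TT_nonneg _ this] show ?thesis by simp
  qed
qed

lemma summable_hc: "1 \<le> n \<Longrightarrow> summable (\<lambda>k. hc n k * t ^ k)"
  by (rule summable_rabs_cancel[OF summable_hc_abs])

lemma ft_eq: "ft n = (\<lambda>s. (sqrt (2*pi) / sqrt (fact n)) * (std_normal_density s * s ^ (n - 1)))"
  by (auto simp: fun_eq_iff ft_def std_normal_density_def)

lemma integrable_ft: "integrable lborel (ft n)"
  unfolding ft_eq by (intro integrable_mult_right integrable_std_normal_moment)

lemma cont_ft: "continuous_on UNIV (ft n)"
  unfolding ft_def by (intro continuous_intros) auto

lemma set_integrable_ft: "A \<in> sets borel \<Longrightarrow> set_integrable lborel A (ft n)"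
  unfolding set_integrable_def using integrable_ft by (intro integrable_mult_indicator) auto

definition JJ :: "nat \<Rightarrow> real \<Rightarrow> real" where
  "JJ n t = (LBINT s=0..t. ft n s)"

lemma JJ_deriv: "(JJ n has_real_derivative ft n t) (at t)"
proof -
  have "((\<lambda>u. LBINT y=ereal 0..u. ft n y) has_vector_derivative ft n t) (at t within {- (\<bar>t\<bar> + 1)..\<bar>t\<bar> + 1})"
    by (rule interval_integral_FTC2) (auto intro: continuous_on_subset[OF cont_ft])
  moreover have "at t within {- (\<bar>t\<bar> + 1)..\<bar>t\<bar> + 1} = at t"
    by (rule at_within_Icc_at) auto
  ultimately show ?thesis unfolding JJ_def has_real_derivative_iff_has_vector_derivative by (simp add: zero_ereal_def)
qed

lemma GI_Ioi: "GI n t = (LBINT s=ereal t..\<infinity>. ft n s)"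
  unfolding GI_def interval_integral_to_infinity_eq
  by (rule set_integral_discrete_difference[where X="{t}"]) auto

lemma GI_split: assumes "0 \<le> t" shows "GI n t = GI n 0 - JJ n t"
proof -
  have "(LBINT s=ereal 0..ereal t. ft n s) + (LBINT s=ereal t..\<infinity>. ft n s) = (LBINT s=ereal 0..\<infinity>. ft n s)"
  proof (rule interval_integral_sum)
    show "interval_lebesgue_integrable lborel (min (ereal 0) (min (ereal t) \<infinity>)) (max (ereal 0) (max (ereal t) \<infinity>)) (ft n)"
      unfolding interval_lebesgue_integrable_def using assms by (auto intro: set_integrable_ft)
  qed
  then show ?thesis unfolding GI_Ioi JJ_def by (simp add: zero_ereal_def)
qed

definition HH :: "nat \<Rightarrow> real \<Rightarrow> real" where
  "HH n t = (\<Sum>k. hc n k * t ^ k)"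

lemma HH_deriv: "1 \<le> n \<Longrightarrow> (HH n has_real_derivative (\<Sum>k. diffs (hc n) k * t ^ k)) (at t)"
  unfolding HH_def by (rule termdiffs_strong_converges_everywhere[OF summable_hc])

lemma diffs_coef: "diffs (hc n) k - (case k of 0 \<Rightarrow> 0 | Suc j \<Rightarrow> hc n j) = - (if k = n - 1 then 1 / sqrt (fact n) else 0)"
proof (cases k)
  case 0 then show ?thesis by (simp add: diffs_def)
next
  case (Suc j)
  have e: "real (Suc (Suc j)) = real j + 2" by simp
  have p: "real j + 2 \<noteq> 0" by (simp add: add_nonneg_eq_0_iff)
  have "diffs (hc n) (Suc j) = hc n j - (if Suc j = n - 1 then 1 / sqrt (fact n) else 0)"
    unfolding diffs_def hc.simps e using p by simp
  then show ?thesis using Suc by simp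
qed

lemma HH_ode:
  assumes "1 \<le> n"
  shows "(\<Sum>k. diffs (hc n) k * t ^ k) - t * HH n t = - (t ^ (n - 1) / sqrt (fact n))"
proof -
  have s1: "(\<lambda>k. diffs (hc n) k * t ^ k) sums (\<Sum>k. diffs (hc n) k * t ^ k)"
    by (rule summable_sums, rule termdiff_converges_all) (use summable_hc[OF assms] in auto)
  have "(\<lambda>j. t * (hc n j * t ^ j)) sums (t * HH n t)"
    unfolding HH_def by (rule sums_mult, rule summable_sums, rule summable_hc[OF assms])
  then have "(\<lambda>j. (\<lambda>k. (case k of 0 \<Rightarrow> 0 | Suc j \<Rightarrow> hc n j) * t ^ k) (Suc j)) sums (t * HH n t)"
    by (simp add: mult_ac)
  then have s2: "(\<lambda>k. (case k of 0 \<Rightarrow> 0 | Suc j \<Rightarrow> hc n j) * t ^ k) sums (t * HH n t)"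
    by (subst (asm) sums_Suc_iff) simp
  have "(\<lambda>k. diffs (hc n) k * t ^ k - (case k of 0 \<Rightarrow> 0 | Suc j \<Rightarrow> hc n j) * t ^ k) sums
      ((\<Sum>k. diffs (hc n) k * t ^ k) - t * HH n t)"
    by (rule sums_diff[OF s1 s2])
  moreover have "(\<lambda>k. diffs (hc n) k * t ^ k - (case k of 0 \<Rightarrow> 0 | Suc j \<Rightarrow> hc n j) * t ^ k)
      = (\<lambda>k. if k = n - 1 then - (t ^ (n - 1) / sqrt (fact n)) else 0)"
  proof
    fix k
    have "diffs (hc n) k * t ^ k - (case k of 0 \<Rightarrow> 0 | Suc j \<Rightarrow> hc n j) * t ^ k
       = (diffs (hc n) k - (case k of 0 \<Rightarrow> 0 | Suc j \<Rightarrow> hc n j)) * t ^ k" by (simp add: algebra_simps)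
    then show "diffs (hc n) k * t ^ k - (case k of 0 \<Rightarrow> 0 | Suc j \<Rightarrow> hc n j) * t ^ k
      = (if k = n - 1 then - (t ^ (n - 1) / sqrt (fact n)) else 0)"
      by (simp only: diffs_coef) auto
  qed
  ultimately have "(\<lambda>k. if k = n - 1 then - (t ^ (n - 1) / sqrt (fact n)) else 0) sums
      ((\<Sum>k. diffs (hc n) k * t ^ k) - t * HH n t)" by simp
  moreover have "(\<lambda>k. if k = n - 1 then - (t ^ (n - 1) / sqrt (fact n)) else 0) sums (- (t ^ (n - 1) / sqrt (fact n)))"
    by (rule sums_single)
  ultimately show ?thesis by (rule sums_unique2)
qed

lemma HH_0: "HH n 0 = GI n 0"
  unfolding HH_def using powser_zero[of "hc n"] by simp

lemma JJ_0: "JJ n 0 = 0"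
  unfolding JJ_def by (simp add: zero_ereal_def)

lemma HH_GI:
  assumes "1 \<le> n" "0 \<le> t"
  shows "HH n t = exp (t\<^sup>2 / 2) * GI n t"
proof -
  define D where "D t = HH n t * exp (- (t\<^sup>2) / 2) - GI n 0 + JJ n t" for t
  have "(D has_real_derivative 0) (at x)" for x
  proof -
    have "(D has_real_derivative ((\<Sum>k. diffs (hc n) k * x ^ k) * exp (- (x\<^sup>2) / 2)
        + HH n x * (exp (- (x\<^sup>2) / 2) * (- (2 * x) / 2)) - 0 + ft n x)) (at x)"
      unfolding D_def
      by (intro derivative_intros HH_deriv[OF assms(1)] JJ_deriv DERIV_chain2[OF DERIV_exp]) (auto intro!: derivative_eq_intros HH_deriv[OF assms(1)])
    moreover have "(\<Sum>k. diffs (hc n) k * x ^ k) * exp (- (x\<^sup>2) / 2)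
        + HH n x * (exp (- (x\<^sup>2) / 2) * (- (2 * x) / 2)) - 0 + ft n x = 0"
    proof -
      have "(\<Sum>k. diffs (hc n) k * x ^ k) * exp (- (x\<^sup>2) / 2)
        + HH n x * (exp (- (x\<^sup>2) / 2) * (- (2 * x) / 2)) - 0 + ft n x
        = ((\<Sum>k. diffs (hc n) k * x ^ k) - x * HH n x) * exp (- (x\<^sup>2) / 2) + ft n x"
        by (simp add: algebra_simps)
      also have "\<dots> = 0" unfolding HH_ode[OF assms(1)] ft_def by (simp add: field_simps)
      finally show ?thesis .
    qed
    ultimately show ?thesis by simp
  qed
  then have "D t = D 0" by (intro DERIV_isconst_all) auto
  also have "D 0 = 0" by (simp add: D_def HH_0 JJ_0)
  finally have "HH n t * exp (- (t\<^sup>2) / 2) = GI n t"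
    using GI_split[OF assms(2), of n] by (simp add: D_def)
  moreover have b: "exp (t\<^sup>2 / 2) * exp (- (t\<^sup>2) / 2) = 1" by (simp flip: exp_add)
  ultimately show ?thesis
    by (metis (no_types, lifting) mult.commute mult.left_commute mult.right_neutral)
qed

definition pc :: "nat \<Rightarrow> nat \<Rightarrow> real" where
  "pc n k = (case k of 0 \<Rightarrow> 0 | Suc j \<Rightarrow> hc n j / real (Suc j))"

definition PP :: "nat \<Rightarrow> real \<Rightarrow> real" where
  "PP n y = (\<Sum>k. pc n k * y ^ k)"

lemma diffs_pc: "diffs (pc n) = hc n"
  by (auto simp: fun_eq_iff diffs_def pc_def simp del: of_nat_Suc)

lemma summable_pc_abs:
  assumes "1 \<le> n" shows "summable (\<lambda>k. \<bar>pc n k * y ^ k\<bar>)"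
proof -
  have "summable (\<lambda>j. \<bar>pc n (Suc j) * y ^ Suc j\<bar>)"
  proof (rule summable_comparison_test')
    show "summable (\<lambda>j. \<bar>y\<bar> * \<bar>hc n j * y ^ j\<bar>)"
      by (intro summable_mult summable_hc_abs[OF assms])
    fix j
    have "\<bar>pc n (Suc j) * y ^ Suc j\<bar> = \<bar>y\<bar> * \<bar>hc n j * y ^ j\<bar> / real (Suc j)"
      by (simp add: pc_def abs_mult power_abs)
    also have "\<dots> \<le> \<bar>y\<bar> * \<bar>hc n j * y ^ j\<bar>"
      using mult_left_mono[of 1 "real (Suc j)" "\<bar>y\<bar> * \<bar>hc n j * y ^ j\<bar>"] by (simp add: divide_le_eq)
    finally show "norm \<bar>pc n (Suc j) * y ^ Suc j\<bar> \<le> \<bar>y\<bar> * \<bar>hc n j * y ^ j\<bar>" by simp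
  qed
  then show ?thesis by (subst summable_Suc_iff[symmetric])
qed

lemma summable_pc: "1 \<le> n \<Longrightarrow> summable (\<lambda>k. pc n k * y ^ k)"
  by (rule summable_rabs_cancel[OF summable_pc_abs])

lemma PP_deriv: "1 \<le> n \<Longrightarrow> (PP n has_real_derivative HH n t) (at t)"
  using termdiffs_strong_converges_everywhere[OF summable_pc, of n t]
  unfolding PP_def HH_def diffs_pc by simp

lemma PP_0: "PP n 0 = 0"
  unfolding PP_def using powser_zero[of "pc n"] by (simp add: pc_def)

lemma cont_HH: "1 \<le> n \<Longrightarrow> continuous_on UNIV (HH n)"
  by (intro continuous_at_imp_continuous_on ballI DERIV_isCont[OF HH_deriv])

lemma inner_eq:
  assumes "1 \<le> n"
  shows "(LBINT s:{t..}. inverse s * exp (- (s\<^sup>2) / 2) * u n s) = GI n t"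
  unfolding GI_def
proof (rule set_lebesgue_integral_cong_AE)
  show "(\<lambda>s. inverse s * exp (- (s\<^sup>2) / 2) * u n s) \<in> borel_measurable lborel"
    unfolding u_def by measurable
  show "ft n \<in> borel_measurable lborel" using integrable_ft by auto
  have "AE s in lborel. s \<noteq> 0" by (rule AE_lborel_singleton)
  then show "AE s\<in>{t..} in lborel. inverse s * exp (- (s\<^sup>2) / 2) * u n s = ft n s"
  proof (rule AE_mp, intro AE_I2 impI)
    fix s :: real assume s: "s \<noteq> 0"
    have "s ^ n = s * s ^ (n - 1)" using assms by (cases n) auto
    then show "inverse s * exp (- (s\<^sup>2) / 2) * u n s = ft n s"
      using s by (simp add: u_def ft_def field_simps)
  qed
qed simp

lemma K0_eq:
  assumes "1 \<le> n" "0 \<le> y"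
  shows "K0 lam (u n) y = PP n y / lam"
proof -
  have "(LBINT t=0..y. exp (t\<^sup>2 / 2) * (LBINT s:{t..}. inverse s * exp (- (s\<^sup>2) / 2) * u n s))
      = (LBINT t=ereal 0..ereal y. HH n t)"
    unfolding zero_ereal_def
  proof (rule interval_integral_cong)
    fix t assume "t \<in> einterval (min (ereal 0) (ereal y)) (max (ereal 0) (ereal y))"
    then have "0 \<le> t" using assms by (auto simp: einterval_iff min_def max_def split: if_splits)
    then show "exp (t\<^sup>2 / 2) * (LBINT s:{t..}. inverse s * exp (- (s\<^sup>2) / 2) * u n s) = HH n t"
      using inner_eq[OF assms(1)] HH_GI[OF assms(1)] by simp
  qed
  also have "\<dots> = PP n y - PP n 0"
  proof (rule interval_integral_FTC_finite)
    show "continuous_on {min 0 y..max 0 y} (HH n)" by (rule continuous_on_subset[OF cont_HH[OF assms(1)]]) auto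
    show "(PP n has_vector_derivative HH n x) (at x within {min 0 y..max 0 y})" for x
      using PP_deriv[OF assms(1), of x]
      by (auto simp: has_real_derivative_iff_has_vector_derivative intro: has_vector_derivative_at_within)
  qed
  finally show ?thesis by (simp add: K0_def PP_0)
qed

definition aa :: "nat \<Rightarrow> real \<Rightarrow> nat \<Rightarrow> complex" where
  "aa n lam k = complex_of_real (pc n k / lam) * \<i> ^ k"

lemma norm_aa: "cmod (aa n lam k) = \<bar>pc n k\<bar> / \<bar>lam\<bar>"
  unfolding aa_def norm_mult norm_power norm_of_real by simp

lemma aa_conv: "1 \<le> n \<Longrightarrow> summable (\<lambda>k. aa n lam k * z ^ k)"
proof (rule summable_norm_cancel, rule summable_comparison_test')
  assume n: "1 \<le> n"
  show "summable (\<lambda>k. \<bar>pc n k * (cmod z) ^ k\<bar> / \<bar>lam\<bar>)"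
    by (intro summable_divide summable_pc_abs[OF n])
  show "norm (norm (aa n lam k * z ^ k)) \<le> \<bar>pc n k * (cmod z) ^ k\<bar> / \<bar>lam\<bar>" for k
    by (simp add: norm_mult norm_power norm_aa abs_mult)
qed

lemma sq_aux2: "(d::real) \<noteq> 0 \<Longrightarrow> L \<noteq> 0 \<Longrightarrow> (h / d / L)\<^sup>2 * (d * F) = h\<^sup>2 * F / d / L\<^sup>2"
  by (simp add: power_divide power2_eq_square field_simps)

lemma aa_summ:
  assumes "1 \<le> n" "lam \<noteq> 0"
  shows "summable (\<lambda>k. (cmod (aa n lam k))\<^sup>2 * fact k)"
proof -
  have "summable (\<lambda>j. TT n j / lam\<^sup>2)" by (intro summable_divide summable_TT[OF assms(1)])
  moreover have "(cmod (aa n lam (Suc j)))\<^sup>2 * fact (Suc j) = TT n j / lam\<^sup>2" for j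
  proof -
    have "(cmod (aa n lam (Suc j)))\<^sup>2 * fact (Suc j) = (hc n j / real (Suc j) / lam)\<^sup>2 * (real (Suc j) * fact j)"
      by (simp only: norm_aa) (simp add: pc_def power_divide power_abs power_mult_distrib del: of_nat_Suc)
    also have "\<dots> = TT n j / lam\<^sup>2"
      using sq_aux2[of "real (Suc j)" lam "hc n j" "fact j"] assms(2) by (simp add: TT_def add.commute)
    finally show ?thesis .
  qed
  ultimately have "summable (\<lambda>j. (cmod (aa n lam (Suc j)))\<^sup>2 * fact (Suc j))" by simp
  then show ?thesis by (subst summable_Suc_iff[symmetric])
qed

lemma aa_ray:
  assumes "1 \<le> n"
  shows "(\<Sum>k. aa n lam k * (- \<i> * complex_of_real y) ^ k) = complex_of_real (PP n y / lam)"
proof -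
  have e: "aa n lam k * (- \<i> * complex_of_real y) ^ k = complex_of_real (pc n k / lam * y ^ k)" for k
  proof -
    have "\<i> ^ k * (- \<i> * complex_of_real y) ^ k = (\<i> * (- \<i> * complex_of_real y)) ^ k"
      by (simp only: power_mult_distrib)
    also have "\<i> * (- \<i> * complex_of_real y) = complex_of_real y" by simp
    finally show ?thesis by (simp add: aa_def mult.assoc)
  qed
  have "(\<lambda>k. pc n k * y ^ k / lam) sums (PP n y / lam)"
    unfolding PP_def by (intro sums_divide summable_sums summable_pc[OF assms])
  then have "(\<lambda>k. pc n k / lam * y ^ k) sums (PP n y / lam)" by (simp add: field_simps)
  then have "(\<lambda>k. complex_of_real (pc n k / lam * y ^ k)) sums complex_of_real (PP n y / lam)"
    by (subst sums_of_real_iff)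
  then show ?thesis unfolding e[symmetric] by (rule sums_unique[symmetric])
qed

theorem mainTheorem7:
  fixes lam :: real and n :: nat
  assumes "lam \<noteq> 0" and "n \<ge> 1"
  shows "\<exists>\<phi>\<in>bargmann0. \<forall>y::real. y \<ge> 0 \<longrightarrow>
           \<phi> (- \<i> * complex_of_real y) = complex_of_real (K0 lam (u n) y)"
proof
  define phi where "phi z = (\<Sum>k. aa n lam k * z ^ k)" for z
  show "\<forall>y::real. y \<ge> 0 \<longrightarrow> phi (- \<i> * complex_of_real y) = complex_of_real (K0 lam (u n) y)"
    using aa_ray[OF assms(2)] K0_eq[OF assms(2)] by (simp add: phi_def)
  have hol: "phi holomorphic_on UNIV"
    unfolding holomorphic_on_open[OF open_UNIV] phi_def
    using termdiffs_strong_converges_everywhere[OF aa_conv[OF assms(2)]] by blast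
  have int: "integrable lborel (\<lambda>z. (cmod (phi z))\<^sup>2 * exp (- (cmod z)\<^sup>2))"
    unfolding phi_def by (rule series_bargmann[OF aa_summ[OF assms(2,1)] aa_conv[OF assms(2)]])
  have z: "phi 0 = 0"
    unfolding phi_def using powser_zero[of "aa n lam"] by (simp add: aa_def pc_def)
  show "phi \<in> bargmann0" using hol int z by (simp add: bargmann0_def bargmann_def)
qed

end
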